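(* Let $t,w,w',n,g$ be positive integers. If there exists a Steiner system $\mathrm{S}(t,w',n)$ and a generalized Steiner system $\mathrm{GS}(t,w,w',g)$, then there exists a generalized Steiner system $\mathrm{GS}(t,w,n,g)$.
   Context: A Steiner system $\mathrm{S}(t,k,n)$ is a pair $(X,\mathcal{B})$ with $|X|=n$ and $\mathcal{B}$ a family of $k$-subsets (blocks) of $X$ such that every $t$-subset of $X$ is contained in exactly one block. For a set $Y$ of size $m$ (e.g. $Y=[m]$), let $X=Y\times[g]$ with groups $G_y=\{y\}\times[g]$, $y\in Y$. An H-design $\mathrm{H}(m,g,w,t)$ on this set is a family $\mathcal{A}$ of $w$-subsets (blocks) of $X$, each meeting every group in at most one point, such that each $t$-subset of $X$ whose points lie in $t$ distinct groups is contained in exactly one block. Each block $\{(y_1,a_1),\dots,(y_w,a_w)\}$ is identified with the word of length $m$ over $\{0\}\cup[g]$ (indexed by $Y$) having entry $a_s$ at coordinate $y_s$ and $0$ elsewhere. A generalized Steiner system $\mathrm{GS}(t,w,m,g)$ is an H-design $\mathrm{H}(m,g,w,t)$ such that any two distinct blocks, viewed as words, have Hamming distance at least $2(w-t)+1$. *)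

theory Defs
  imports Main
begin

text \<open>Steiner system S(t,k,n) on a ground set X (with card X = n).\<close>
definition steiner_system :: "nat \<Rightarrow> nat \<Rightarrow> 'a set \<Rightarrow> 'a set set \<Rightarrow> bool" where
  "steiner_system t k X B \<longleftrightarrow> finite X \<and> (\<forall>b\<in>B. b \<subseteq> X \<and> card b = k) \<and>
     (\<forall>T. T \<subseteq> X \<and> card T = t \<longrightarrow> (\<exists>!b. b \<in> B \<and> T \<subseteq> b))"

text \<open>Point set Y x [g] with Y = [m]; the group of y is {y} x [g].\<close>
definition point_set :: "nat \<Rightarrow> nat \<Rightarrow> (nat \<times> nat) set" where
  "point_set m g = {1..m} \<times> {1..g}"

definition H_design :: "nat \<Rightarrow> nat \<Rightarrow> nat \<Rightarrow> nat \<Rightarrow> (nat \<times> nat) set set \<Rightarrow> bool" where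
  "H_design m g w t A \<longleftrightarrow>
     (\<forall>b\<in>A. b \<subseteq> point_set m g \<and> card b = w \<and> (\<forall>p\<in>b. \<forall>q\<in>b. fst p = fst q \<longrightarrow> p = q)) \<and>
     (\<forall>T. T \<subseteq> point_set m g \<and> card T = t \<and> card (fst ` T) = t \<longrightarrow> (\<exists>!b. b \<in> A \<and> T \<subseteq> b))"

definition block_word :: "(nat \<times> nat) set \<Rightarrow> nat \<Rightarrow> nat" where
  "block_word b y = (if \<exists>a. (y, a) \<in> b then (THE a. (y, a) \<in> b) else 0)"

definition hamming :: "nat \<Rightarrow> (nat \<times> nat) set \<Rightarrow> (nat \<times> nat) set \<Rightarrow> nat" where
  "hamming m b b' = card {y \<in> {1..m}. block_word b y \<noteq> block_word b' y}"

definition GS :: "nat \<Rightarrow> nat \<Rightarrow> nat \<Rightarrow> nat \<Rightarrow> (nat \<times> nat) set set \<Rightarrow> bool" where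
  "GS t w m g A \<longleftrightarrow> H_design m g w t A \<and>
     (\<forall>b\<in>A. \<forall>b'\<in>A. b \<noteq> b' \<longrightarrow> int (hamming m b b') \<ge> 2 * (int w - int t) + 1)"

end

theory Submission
  imports Defs
begin

abbreviation finj :: "(nat \<times> nat) set \<Rightarrow> bool" where
  "finj b \<equiv> (\<forall>p\<in>b. \<forall>q\<in>b. fst p = fst q \<longrightarrow> p = q)"

lemma bw_in:
  assumes "finj b" "(y,x) \<in> b" shows "block_word b y = x"
proof -
  have "(THE a. (y, a) \<in> b) = x"
    using assms by (intro the_equality) fastforce+
  then show ?thesis unfolding block_word_def using assms by auto
qed

lemma bw_out: "y \<notin> fst ` b \<Longrightarrow> block_word b y = 0"
  unfolding block_word_def by force

lemma steiner_transport:
  assumes S: "steiner_system t k X B" and h: "bij_betw h X Y"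
  shows "steiner_system t k Y ((`) h ` B)"
proof -
  have fX: "finite X" using S unfolding steiner_system_def by auto
  have inj: "inj_on h X" and hX: "h ` X = Y" using h by (auto simp: bij_betw_def)
  have bl: "\<forall>b\<in>B. b \<subseteq> X \<and> card b = k" using S unfolding steiner_system_def by auto
  have un: "\<And>T. T \<subseteq> X \<Longrightarrow> card T = t \<Longrightarrow> \<exists>!b. b \<in> B \<and> T \<subseteq> b"
    using S unfolding steiner_system_def by auto
  have fY: "finite Y" using fX hX by auto
  have blk: "\<forall>b\<in>(`) h ` B. b \<subseteq> Y \<and> card b = k"
  proof
    fix c assume "c \<in> (`) h ` B"
    then obtain b where b: "b \<in> B" "c = h ` b" by auto
    then have "b \<subseteq> X" "card b = k" using bl by auto
    then have "inj_on h b" using inj inj_on_subset by blast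
    then show "c \<subseteq> Y \<and> card c = k" using b hX \<open>b \<subseteq> X\<close> \<open>card b = k\<close>
      by (auto simp: card_image)
  qed
  have uni: "\<exists>!b. b \<in> (`) h ` B \<and> T \<subseteq> b" if T: "T \<subseteq> Y" "card T = t" for T
  proof -
    define T0 where "T0 = X \<inter> h -` T"
    have T0T: "h ` T0 = T" using T hX unfolding T0_def by auto
    have "inj_on h T0" using inj inj_on_subset unfolding T0_def by blast
    then have "card T0 = t" using T0T T by (metis card_image)
    then have ex: "\<exists>!b. b \<in> B \<and> T0 \<subseteq> b" using un[of T0] unfolding T0_def by auto
    then obtain b where b: "b \<in> B" "T0 \<subseteq> b" by auto
    have bu: "\<And>b'. b' \<in> B \<Longrightarrow> T0 \<subseteq> b' \<Longrightarrow> b' = b" using ex b by auto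
    have key: "T \<subseteq> h ` b' \<longleftrightarrow> T0 \<subseteq> b'" if "b' \<in> B" for b'
    proof
      assume "T \<subseteq> h ` b'"
      show "T0 \<subseteq> b'"
      proof
        fix x assume x: "x \<in> T0"
        then have "h x \<in> h ` b'" using \<open>T \<subseteq> h ` b'\<close> unfolding T0_def by auto
        then obtain y where "y \<in> b'" "h y = h x" by auto
        moreover have "y \<in> X" using \<open>y \<in> b'\<close> that bl by auto
        ultimately show "x \<in> b'" using x inj unfolding T0_def inj_on_def by blast
      qed
    next
      assume "T0 \<subseteq> b'" then show "T \<subseteq> h ` b'" using T0T by auto
    qed
    show ?thesis
    proof (rule ex1I[of _ "h ` b"])
      show "h ` b \<in> (`) h ` B \<and> T \<subseteq> h ` b" using b key by auto
    next
      fix c assume "c \<in> (`) h ` B \<and> T \<subseteq> c"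
      then obtain b' where "b' \<in> B" "c = h ` b'" "T \<subseteq> h ` b'" by auto
      then show "c = h ` b" using key bu by auto
    qed
  qed
  show ?thesis unfolding steiner_system_def using fY blk uni by simp
qed

lemma Fmap_finj:
  assumes inj: "inj_on \<psi> {1..w'}" and a: "a \<subseteq> point_set w' g" "finj a"
  shows "finj (map_prod \<psi> id ` a)"
proof (intro ballI impI)
  fix p q assume p: "p \<in> map_prod \<psi> id ` a" and q: "q \<in> map_prod \<psi> id ` a" and e: "fst p = fst q"
  obtain p0 where p0: "p0 \<in> a" "p = map_prod \<psi> id p0" using p by auto
  obtain q0 where q0: "q0 \<in> a" "q = map_prod \<psi> id q0" using q by auto
  have "fst p0 \<in> {1..w'}" "fst q0 \<in> {1..w'}" using p0 q0 a unfolding point_set_def by auto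
  moreover have "\<psi> (fst p0) = \<psi> (fst q0)" using e p0 q0 by (simp add: map_prod_def split_def)
  ultimately have "fst p0 = fst q0" using inj unfolding inj_on_def by blast
  then have "p0 = q0" using a(2) p0 q0 by blast
  then show "p = q" using p0 q0 by simp
qed

lemma Fmap_props:
  assumes inj: "inj_on \<psi> {1..w'}" and rng: "\<psi> ` {1..w'} \<subseteq> {1..n}"
    and a: "a \<subseteq> point_set w' g" "finj a"
  shows "map_prod \<psi> id ` a \<subseteq> point_set n g"
    "card (map_prod \<psi> id ` a) = card a"
    "finj (map_prod \<psi> id ` a)"
proof -
  have rng': "\<And>x. x \<in> {1..w'} \<Longrightarrow> \<psi> x \<in> {1..n}" using rng by (meson image_subset_iff)
  show "map_prod \<psi> id ` a \<subseteq> point_set n g"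
  proof
    fix p assume "p \<in> map_prod \<psi> id ` a"
    then obtain x y where xy: "(x,y) \<in> a" "p = (\<psi> x, y)" by auto
    then have "x \<in> {1..w'}" "y \<in> {1..g}" using a unfolding point_set_def by auto
    then show "p \<in> point_set n g" using rng'[of x] xy unfolding point_set_def by auto
  qed
  have "inj_on (map_prod \<psi> id) a"
  proof (rule inj_onI)
    fix p q assume p: "p \<in> a" and q: "q \<in> a" and e: "map_prod \<psi> id p = map_prod \<psi> id q"
    have "fst p \<in> {1..w'}" "fst q \<in> {1..w'}" using p q a unfolding point_set_def by auto
    moreover have "\<psi> (fst p) = \<psi> (fst q)" using e by (simp add: map_prod_def split_def)
    ultimately have "fst p = fst q" using inj unfolding inj_on_def by blast
    then show "p = q" using a(2) p q by blast
  qed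
  then show "card (map_prod \<psi> id ` a) = card a" by (simp add: card_image)
  show "finj (map_prod \<psi> id ` a)" using Fmap_finj[OF inj a] .
qed

lemma Fmap_bw:
  assumes inj: "inj_on \<psi> {1..w'}" and a: "a \<subseteq> point_set w' g" "finj a"
  shows "i \<in> {1..w'} \<Longrightarrow> block_word (map_prod \<psi> id ` a) (\<psi> i) = block_word a i"
    and "y \<notin> \<psi> ` {1..w'} \<Longrightarrow> block_word (map_prod \<psi> id ` a) y = 0"
proof -
  have fi: "finj (map_prod \<psi> id ` a)" using Fmap_finj[OF inj a] .
  assume i: "i \<in> {1..w'}"
  show "block_word (map_prod \<psi> id ` a) (\<psi> i) = block_word a i"
  proof (cases "i \<in> fst ` a")
    case True
    then obtain x where x: "(i,x) \<in> a" by auto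
    then have "(\<psi> i, x) \<in> map_prod \<psi> id ` a" by (metis id_apply image_eqI map_prod_simp)
    then show ?thesis using bw_in[OF fi] bw_in[OF a(2) x] by simp
  next
    case False
    have "\<psi> i \<notin> fst ` (map_prod \<psi> id ` a)"
    proof
      assume "\<psi> i \<in> fst ` (map_prod \<psi> id ` a)"
      then obtain p where p: "p \<in> a" "\<psi> (fst p) = \<psi> i" by (auto simp: map_prod_def split_def)
      then have "fst p \<in> {1..w'}" using a unfolding point_set_def by auto
      then have "fst p = i" using p(2) i inj unfolding inj_on_def by blast
      then show False using False p(1) by blast
    qed
    then show ?thesis using bw_out False by metis
  qed
next
  assume y: "y \<notin> \<psi> ` {1..w'}"
  have "y \<notin> fst ` (map_prod \<psi> id ` a)" using y a unfolding point_set_def by auto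
  then show "block_word (map_prod \<psi> id ` a) y = 0" by (rule bw_out)
qed

lemma Fmap_hamming:
  assumes inj: "inj_on \<psi> {1..w'}" and rng: "\<psi> ` {1..w'} \<subseteq> {1..n}"
    and a1: "a1 \<subseteq> point_set w' g" "finj a1" and a2: "a2 \<subseteq> point_set w' g" "finj a2"
  shows "hamming n (map_prod \<psi> id ` a1) (map_prod \<psi> id ` a2) = hamming w' a1 a2"
proof -
  let ?F = "map_prod \<psi> id"
  have "{y \<in> {1..n}. block_word (?F ` a1) y \<noteq> block_word (?F ` a2) y}
     = \<psi> ` {i \<in> {1..w'}. block_word a1 i \<noteq> block_word a2 i}" (is "?L = ?R")
  proof
    have rng': "\<And>x. x \<in> {1..w'} \<Longrightarrow> \<psi> x \<in> {1..n}" using rng by (meson image_subset_iff)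
    show "?R \<subseteq> ?L"
    proof
      fix y assume "y \<in> ?R"
      then obtain i where i: "i \<in> {1..w'}" "y = \<psi> i" "block_word a1 i \<noteq> block_word a2 i" by auto
      then show "y \<in> ?L" using rng'[OF i(1)] Fmap_bw(1)[OF inj a1 i(1)] Fmap_bw(1)[OF inj a2 i(1)] by simp
    qed
  next
    show "?L \<subseteq> ?R"
    proof
      fix y assume y: "y \<in> ?L"
      have "y \<in> \<psi> ` {1..w'}"
      proof (rule ccontr)
        assume "y \<notin> \<psi> ` {1..w'}"
        then have "block_word (?F ` a1) y = 0" "block_word (?F ` a2) y = 0"
          using Fmap_bw(2)[OF inj a1] Fmap_bw(2)[OF inj a2] by blast+
        then show False using y by simp
      qed
      then obtain i where i: "i \<in> {1..w'}" "y = \<psi> i" by auto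
      then show "y \<in> ?R" using y Fmap_bw(1)[OF inj a1] Fmap_bw(1)[OF inj a2] by auto
    qed
  qed
  moreover have "inj_on \<psi> {i \<in> {1..w'}. block_word a1 i \<noteq> block_word a2 i}"
    using inj by (rule inj_on_subset) auto
  ultimately show ?thesis unfolding hamming_def by (simp add: card_image)
qed

lemma cross_dist:
  assumes b1: "b1 \<subseteq> point_set n g" "finj b1" "card b1 = w"
    and b2: "b2 \<subseteq> point_set n g" "finj b2" "card b2 = w"
    and k: "card (fst ` b1 \<inter> fst ` b2) < t"
  shows "int (hamming n b1 b2) \<ge> 2 * (int w - int t) + 1"
proof -
  let ?S1 = "fst ` b1" and ?S2 = "fst ` b2"
  have f1: "finite b1" "finite b2" using b1 b2 finite_subset unfolding point_set_def by blast+
  have c1: "card ?S1 = w" using b1 by (simp add: card_image inj_on_def)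
  have c2: "card ?S2 = w" using b2 by (simp add: card_image inj_on_def)
  let ?D = "{y \<in> {1..n}. block_word b1 y \<noteq> block_word b2 y}"
  have sub: "(?S1 - ?S2) \<union> (?S2 - ?S1) \<subseteq> ?D"
  proof
    fix y assume y: "y \<in> (?S1 - ?S2) \<union> (?S2 - ?S1)"
    show "y \<in> ?D"
    proof (cases "y \<in> ?S1")
      case True
      then obtain x where x: "(y,x) \<in> b1" by force
      have "x \<ge> 1" "y \<in> {1..n}" using x b1 unfolding point_set_def by auto
      moreover have "y \<notin> ?S2" using True y by auto
      ultimately show ?thesis using bw_in[OF b1(2) x] bw_out[of y b2] by auto
    next
      case False
      then have "y \<in> ?S2" using y by auto
      then obtain x where x: "(y,x) \<in> b2" by force
      have "x \<ge> 1" "y \<in> {1..n}" using x b2 unfolding point_set_def by auto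
      then show ?thesis using bw_in[OF b2(2) x] bw_out[of y b1] False by auto
    qed
  qed
  have "card ((?S1 - ?S2) \<union> (?S2 - ?S1)) = card (?S1 - ?S2) + card (?S2 - ?S1)"
    using f1 by (intro card_Un_disjoint) auto
  also have "\<dots> = (w - card (?S1 \<inter> ?S2)) + (w - card (?S1 \<inter> ?S2))"
    using f1 c1 c2 by (simp add: card_Diff_subset_Int Int_commute)
  finally have "card ((?S1 - ?S2) \<union> (?S2 - ?S1)) = 2 * (w - card (?S1 \<inter> ?S2))" by simp
  moreover have "card ((?S1 - ?S2) \<union> (?S2 - ?S1)) \<le> card ?D"
    by (rule card_mono[OF _ sub]) auto
  moreover have "card (?S1 \<inter> ?S2) \<le> w" using c1 f1 by (metis card_mono finite_imageI inf_le1)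
  ultimately have "2 * (w - card (?S1 \<inter> ?S2)) \<le> card ?D" "card (?S1 \<inter> ?S2) \<le> w" by linarith+
  then have "int (card ?D) \<ge> 2 * (int w - int (card (?S1 \<inter> ?S2)))"
    by (metis of_nat_diff of_nat_le_iff of_nat_mult of_nat_numeral)
  moreover have "int (card (?S1 \<inter> ?S2)) + 1 \<le> int t" using k by simp
  ultimately have "int (card ?D) \<ge> 2 * (int w - int t) + 1" by presburger
  then show ?thesis unfolding hamming_def by simp
qed

lemma fst_F: "fst ` (map_prod \<psi> id ` a) = \<psi> ` (fst ` a)"
  by (simp add: image_image map_prod_def split_def)

lemma F_inj:
  assumes inj: "inj_on \<psi> {1..w'}"
  shows "inj_on (map_prod \<psi> id) (point_set w' g)"
proof (rule inj_onI)
  fix p q assume p: "p \<in> point_set w' g" and q: "q \<in> point_set w' g"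
    and e: "map_prod \<psi> id p = map_prod \<psi> id q"
  have "fst p \<in> {1..w'}" "fst q \<in> {1..w'}" using p q unfolding point_set_def by auto
  moreover have "\<psi> (fst p) = \<psi> (fst q)" using e by (simp add: map_prod_def split_def)
  ultimately have "fst p = fst q" using inj unfolding inj_on_def by blast
  moreover have "snd p = snd q" using e by (simp add: map_prod_def split_def)
  ultimately show "p = q" by (simp add: prod_eq_iff)
qed

theorem lemma3p1:
  fixes t w w' n g :: nat
  assumes "t > 0" "w > 0" "w' > 0" "n > 0" "g > 0"
    and "\<exists>(X::nat set) B. card X = n \<and> steiner_system t w' X B"
    and "\<exists>A. GS t w w' g A"
  shows "\<exists>A. GS t w n g A"
proof -
  obtain X :: "nat set" and B where cX: "card X = n" and S: "steiner_system t w' X B"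
    using assms(6) by blast
  have fX: "finite X" using S unfolding steiner_system_def by auto
  obtain h where h: "bij_betw h X {1..n}" using finite_same_card_bij[OF fX, of "{1..n}"] cX by auto
  define B' where "B' = (`) h ` B"
  have S': "steiner_system t w' {1..n} B'" unfolding B'_def by (rule steiner_transport[OF S h])
  have Bb: "\<And>c. c \<in> B' \<Longrightarrow> c \<subseteq> {1..n} \<and> card c = w'"
    using S' unfolding steiner_system_def by auto
  have Bu: "\<And>T. T \<subseteq> {1..n} \<Longrightarrow> card T = t \<Longrightarrow> \<exists>!c. c \<in> B' \<and> T \<subseteq> c"
    using S' unfolding steiner_system_def by auto
  obtain A where GA: "GS t w w' g A" using assms(7) by blast
  have Ab: "\<And>a. a \<in> A \<Longrightarrow> a \<subseteq> point_set w' g \<and> card a = w \<and> finj a"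
    using GA unfolding GS_def H_design_def by auto
  have AbP: "\<And>a. a \<in> A \<Longrightarrow> a \<subseteq> point_set w' g" using Ab by blast
  have Abc: "\<And>a. a \<in> A \<Longrightarrow> card a = w" using Ab by blast
  have Abf: "\<And>a. a \<in> A \<Longrightarrow> finj a" using Ab by blast
  have Au: "\<And>T. T \<subseteq> point_set w' g \<Longrightarrow> card T = t \<Longrightarrow> card (fst ` T) = t \<Longrightarrow> \<exists>!a. a \<in> A \<and> T \<subseteq> a"
    using GA unfolding GS_def H_design_def by auto
  have Ad: "\<And>a a'. a \<in> A \<Longrightarrow> a' \<in> A \<Longrightarrow> a \<noteq> a' \<Longrightarrow> int (hamming w' a a') \<ge> 2 * (int w - int t) + 1"
    using GA unfolding GS_def by auto
  define \<psi> :: "nat set \<Rightarrow> nat \<Rightarrow> nat" where "\<psi> c = (SOME f. bij_betw f {1..w'} c)" for c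
  have \<psi>b: "bij_betw (\<psi> c) {1..w'} c" if c: "c \<in> B'" for c
  proof -
    have "finite c" "card c = w'" using Bb[OF c] finite_subset by auto
    then have "\<exists>f. bij_betw f {1..w'} c" using ex_bij_betw_nat_finite_1 by metis
    then show ?thesis unfolding \<psi>_def by (rule someI_ex)
  qed
  have \<psi>i: "inj_on (\<psi> c) {1..w'}" if "c \<in> B'" for c using \<psi>b[OF that] by (simp add: bij_betw_def)
  have \<psi>r: "\<psi> c ` {1..w'} = c" if "c \<in> B'" for c using \<psi>b[OF that] by (simp add: bij_betw_def)
  have \<psi>r': "\<psi> c ` {1..w'} \<subseteq> {1..n}" if "c \<in> B'" for c using \<psi>r[OF that] Bb[OF that] by simp
  define F :: "nat set \<Rightarrow> nat \<times> nat \<Rightarrow> nat \<times> nat" where "F c = map_prod (\<psi> c) id" for c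
  define A' where "A' = (\<Union>c\<in>B'. (\<lambda>a. F c ` a) ` A)"
  have fstF: "fst ` (F c ` a) \<subseteq> c" if "c \<in> B'" "a \<in> A" for c a
  proof -
    have "fst ` a \<subseteq> {1..w'}" using AbP[OF that(2)] unfolding point_set_def by auto
    then show ?thesis using fst_F[of "\<psi> c" a] \<psi>r[OF that(1)] unfolding F_def by blast
  qed
  have blocks: "b \<subseteq> point_set n g \<and> card b = w \<and> finj b" if bA: "b \<in> A'" for b
  proof -
    obtain c a where ca: "c \<in> B'" "a \<in> A" "b = F c ` a" using bA unfolding A'_def by blast
    have bdef: "b = map_prod (\<psi> c) id ` a" using ca(3) unfolding F_def by simp
    note P = Fmap_props[OF \<psi>i[OF ca(1)] \<psi>r'[OF ca(1)] AbP[OF ca(2)] Abf[OF ca(2)]]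
    have P2: "card (map_prod (\<psi> c) id ` a) = w" using P(2) Abc[OF ca(2)] by (rule trans)
    show ?thesis unfolding bdef using P(1) P2 P(3) by blast
  qed
  have cover: "\<exists>!b. b \<in> A' \<and> T \<subseteq> b"
    if T: "T \<subseteq> point_set n g" "card T = t" "card (fst ` T) = t" for T
  proof -
    have fT: "fst ` T \<subseteq> {1..n}" using T(1) unfolding point_set_def by auto
    have exc: "\<exists>!c. c \<in> B' \<and> fst ` T \<subseteq> c" using Bu[OF fT T(3)] .
    then obtain c where c: "c \<in> B'" "fst ` T \<subseteq> c" by auto
    have cu: "\<And>c'. c' \<in> B' \<Longrightarrow> fst ` T \<subseteq> c' \<Longrightarrow> c' = c" using exc c by auto
    define T0 where "T0 = F c -` T \<inter> point_set w' g"
    have injF: "inj_on (F c) (point_set w' g)" unfolding F_def by (rule F_inj[OF \<psi>i[OF c(1)]])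
    have T0T: "F c ` T0 = T"
    proof
      show "F c ` T0 \<subseteq> T" unfolding T0_def by blast
    next
      show "T \<subseteq> F c ` T0"
      proof
        fix p assume p: "p \<in> T"
        obtain y x where yx: "p = (y, x)" by (cases p)
        have "y \<in> fst ` T" using p yx by (metis fst_conv image_eqI)
        then have "y \<in> c" using c(2) by blast
        then obtain i where i: "i \<in> {1..w'}" "y = \<psi> c i" using \<psi>r[OF c(1)] by blast
        have "x \<in> {1..g}" using T(1) p yx unfolding point_set_def by auto
        then have "(i, x) \<in> point_set w' g" using i unfolding point_set_def by auto
        moreover have "F c (i, x) = p" using i yx unfolding F_def by simp
        ultimately show "p \<in> F c ` T0" using p unfolding T0_def by (metis IntI image_eqI vimageI)
      qed
    qed
    have T0P: "T0 \<subseteq> point_set w' g" unfolding T0_def by auto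
    have cT0: "card T0 = t" using T0T T(2) inj_on_subset[OF injF T0P] by (metis card_image)
    have fT0: "finite T0" using T0P finite_subset unfolding point_set_def by blast
    have "fst ` T = \<psi> c ` (fst ` T0)" using fst_F[of "\<psi> c" T0] T0T unfolding F_def by simp
    then have "t \<le> card (fst ` T0)" using T(3) card_image_le[OF finite_imageI[OF fT0]] by metis
    moreover have "card (fst ` T0) \<le> t" using cT0 card_image_le[OF fT0] by metis
    ultimately have cfT0: "card (fst ` T0) = t" by simp
    have exa: "\<exists>!a. a \<in> A \<and> T0 \<subseteq> a" using Au[OF T0P cT0 cfT0] .
    then obtain a where a: "a \<in> A" "T0 \<subseteq> a" by auto
    have au: "\<And>a'. a' \<in> A \<Longrightarrow> T0 \<subseteq> a' \<Longrightarrow> a' = a" using exa a by auto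
    have key: "T0 \<subseteq> a'" if a': "a' \<in> A" "T \<subseteq> F c ` a'" for a'
    proof
      fix q assume q: "q \<in> T0"
      then have "F c q \<in> F c ` a'" using a'(2) unfolding T0_def by auto
      then obtain r where r: "r \<in> a'" "F c r = F c q" by auto
      have "r \<in> point_set w' g" using r(1) AbP[OF a'(1)] by blast
      then have "r = q" using r(2) q T0P injF unfolding inj_on_def by blast
      then show "q \<in> a'" using r(1) by simp
    qed
    show ?thesis
    proof (rule ex1I[of _ "F c ` a"])
      show "F c ` a \<in> A' \<and> T \<subseteq> F c ` a"
        using a c(1) T0T unfolding A'_def by auto
    next
      fix b assume b: "b \<in> A' \<and> T \<subseteq> b"
      then obtain c' a' where ca: "c' \<in> B'" "a' \<in> A" "b = F c' ` a'" unfolding A'_def by auto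
      have "fst ` T \<subseteq> c'" using fstF[OF ca(1,2)] b ca(3) by blast
      then have "c' = c" using cu ca(1) by blast
      then have "T0 \<subseteq> a'" using key[OF ca(2)] b ca(3) by simp
      then have "a' = a" using au ca(2) by blast
      then show "b = F c ` a" using ca(3) \<open>c' = c\<close> by simp
    qed
  qed
  have dist: "int (hamming n b b') \<ge> 2 * (int w - int t) + 1"
    if bb: "b \<in> A'" "b' \<in> A'" "b \<noteq> b'" for b b'
  proof -
    obtain c1 a1 where ca1: "c1 \<in> B'" "a1 \<in> A" "b = F c1 ` a1" using bb(1) unfolding A'_def by auto
    obtain c2 a2 where ca2: "c2 \<in> B'" "a2 \<in> A" "b' = F c2 ` a2" using bb(2) unfolding A'_def by auto
    show ?thesis
    proof (cases "c1 = c2")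
      case True
      then have "a1 \<noteq> a2" using bb(3) ca1 ca2 by auto
      moreover have "hamming n b b' = hamming w' a1 a2"
      proof -
        have "b' = F c1 ` a2" using ca2(3) True by simp
        then show ?thesis
          using Fmap_hamming[OF \<psi>i[OF ca1(1)] \<psi>r'[OF ca1(1)] AbP[OF ca1(2)] Abf[OF ca1(2)] AbP[OF ca2(2)] Abf[OF ca2(2)]] ca1(3)
          unfolding F_def by simp
      qed
      ultimately show ?thesis using Ad[OF ca1(2) ca2(2)] by simp
    next
      case False
      have small: "card (c1 \<inter> c2) < t"
      proof (rule ccontr)
        assume "\<not> card (c1 \<inter> c2) < t"
        then obtain T where T: "T \<subseteq> c1 \<inter> c2" "card T = t"
          using obtain_subset_with_card_n by (metis not_less)
        have "T \<subseteq> {1..n}" using T Bb[OF ca1(1)] by auto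
        then have "\<exists>!c. c \<in> B' \<and> T \<subseteq> c" using Bu T(2) by blast
        then show False using T(1) ca1(1) ca2(1) False by blast
      qed
      have fin: "finite (c1 \<inter> c2)" using Bb[OF ca1(1)] finite_subset by blast
      have "card (fst ` b \<inter> fst ` b') \<le> card (c1 \<inter> c2)"
        using fstF[OF ca1(1,2)] fstF[OF ca2(1,2)] ca1(3) ca2(3) by (intro card_mono[OF fin]) blast
      then have "card (fst ` b \<inter> fst ` b') < t" using small by simp
      then show ?thesis using cross_dist blocks[OF bb(1)] blocks[OF bb(2)] by blast
    qed
  qed
  have H: "H_design n g w t A'" unfolding H_design_def
  proof (rule conjI)
    show "\<forall>b\<in>A'. b \<subseteq> point_set n g \<and> card b = w \<and> finj b" using blocks by blast
  next
    show "\<forall>T. T \<subseteq> point_set n g \<and> card T = t \<and> card (fst ` T) = t \<longrightarrow> (\<exists>!b. b \<in> A' \<and> T \<subseteq> b)"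
      using cover by blast
  qed
  have "GS t w n g A'" unfolding GS_def using H dist by blast
  then show ?thesis by blast
qed

end
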